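(* Let $p$ be a prime, $k$ a positive integer with $p\nmid k$, and $\chi_k$ a Dirichlet character modulo $k$. Define $\mathfrak{x}_k(p^n)=\left(\chi_k(p)\right)^n$ for all $n\in\mathbb{Z}$. For $s\in\mathbb{C}$ with $\mathrm{Re}(s)>0$, the twisted Gelfand–Graev–Tate gamma function \[ \Gamma_{\mathfrak{x}}(s)=\int_{\mathbb{Q}_p} e^{2\pi i\xi}\,|\xi|_p^{s-1}\,\mathfrak{x}_k\!\left(|\xi|_p^{-1}\right)d\xi \] is given by \[ \Gamma_{\mathfrak{x}}(s)=\frac{\chi_k(p)-p^{s-1}}{\chi_k(p)\left(1-\chi_k(p)\,p^{-s}\right)}. \]
   Context: $\mathbb{Q}_p$ is the field of $p$-adic numbers with norm $|\cdot|_p$, and $d\xi$ is the additive Haar measure on $\mathbb{Q}_p$ normalized so that $\mathbb{Z}_p=\{|\xi|_p\le1\}$ has measure $1$. For $\xi\in\mathbb{Q}_p$, $e^{2\pi i\xi}$ denotes $\exp(2\pi i\{\xi\}_p)$, where $\{\xi\}_p\in\mathbb{Q}$ is the fractional part of $\xi$ in its $p$-adic expansion (the standard additive character of $\mathbb{Q}_p$). Since $p\nmid k$, $\chi_k(p)$ is a root of unity, so $\mathfrak{x}_k(p^n)$ is defined for negative $n$ as well. The integral is understood as the sum over the shells $\{|\xi|_p=p^n\}$, $n\in\mathbb{Z}$. *)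

theory Defs
  imports "HOL-Probability.Probability"
begin

definition dirichlet_character :: "nat \<Rightarrow> (nat \<Rightarrow> complex) \<Rightarrow> bool" where
  "dirichlet_character k chi \<longleftrightarrow>
     (\<forall>a b. chi (a * b) = chi a * chi b) \<and>
     (\<forall>a. chi (a + k) = chi a) \<and>
     (\<forall>a. chi a \<noteq> 0 \<longleftrightarrow> coprime a k)"

text \<open>The twisted character on powers of p:  frakx p chi n = x_k(p^n) = chi(p)^n, n integer.\<close>
definition frakx :: "nat \<Rightarrow> (nat \<Rightarrow> complex) \<Rightarrow> int \<Rightarrow> complex" where
  "frakx p chi n = (chi p) powi n"

text \<open>Model of the ball p^(-m) Z_p: an element xi is represented by its digit sequence
a :: nat => nat (digits in {0..<p}), xi = sum_j a j * p^(j - m).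
The normalized Haar measure on Z_p is the product of uniform measures on the digits.\<close>
definition Zp_digits :: "nat \<Rightarrow> (nat \<Rightarrow> nat) measure" where
  "Zp_digits p = PiM UNIV (\<lambda>_. measure_pmf (pmf_of_set {0..<p}))"

text \<open>p-adic valuation of xi = sum_j a j p^(j-m) (meaningful when xi is nonzero).\<close>
definition padic_ord :: "int \<Rightarrow> (nat \<Rightarrow> nat) \<Rightarrow> int" where
  "padic_ord m a = int (LEAST j. a j \<noteq> 0) - m"

definition padic_norm :: "nat \<Rightarrow> int \<Rightarrow> (nat \<Rightarrow> nat) \<Rightarrow> real" where
  "padic_norm p m a = (if \<exists>j. a j \<noteq> 0 then real p powi (- padic_ord m a) else 0)"

definition padic_frac :: "nat \<Rightarrow> int \<Rightarrow> (nat \<Rightarrow> nat) \<Rightarrow> real" where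
  "padic_frac p m a = (\<Sum>j < nat m. real (a j) * real p powi (int j - m))"

definition padic_char :: "nat \<Rightarrow> int \<Rightarrow> (nat \<Rightarrow> nat) \<Rightarrow> complex" where
  "padic_char p m a = exp (2 * pi * \<i> * complex_of_real (padic_frac p m a))"

text \<open>Integral over the shell {|xi|_p = p^n} of an integrand F (given as a function of the
representation (m, a) of xi): the shell lies in the ball p^(-n) Z_p, whose Haar measure is
p^n times the pushforward of the normalized measure on Z_p.\<close>
definition shell_integral ::
  "nat \<Rightarrow> int \<Rightarrow> (int \<Rightarrow> (nat \<Rightarrow> nat) \<Rightarrow> complex) \<Rightarrow> complex" where
  "shell_integral p n F =
     complex_of_real (real p powi n) *
     (LINT a|Zp_digits p. indicator {a. padic_norm p n a = real p powi n} a * F n a)"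

text \<open>Integrand e^(2 pi i xi) |xi|_p^(s-1) x_k(|xi|_p^(-1)); note |xi|_p^(-1) = p^(ord xi).\<close>
definition twisted_gamma_integrand ::
  "nat \<Rightarrow> (nat \<Rightarrow> complex) \<Rightarrow> complex \<Rightarrow> int \<Rightarrow> (nat \<Rightarrow> nat) \<Rightarrow> complex" where
  "twisted_gamma_integrand p chi s m a =
     padic_char p m a * complex_of_real (padic_norm p m a) powr (s - 1)
       * frakx p chi (padic_ord m a)"

end

theory Submission imports Defs "HOL-Number_Theory.Number_Theory" begin

lemma Zp_integral_prod:
  fixes h :: "nat \<Rightarrow> nat \<Rightarrow> complex"
  assumes p: "p > 0" and J: "finite J"
  shows "(LINT a|Zp_digits p. (\<Prod>i\<in>J. h i (a i))) = (\<Prod>i\<in>J. (\<Sum>d\<in>{0..<p}. h i d) / of_nat p)"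
proof -
  define M where "M = (\<lambda>_::nat. measure_pmf (pmf_of_set {0..<p}))"
  interpret product_prob_space M UNIV
    unfolding M_def product_prob_space_def product_sigma_finite_def product_prob_space_axioms_def
    by (auto intro: prob_space_measure_pmf prob_space_imp_sigma_finite)
  have D: "distr (PiM UNIV M) (PiM J M) (\<lambda>x. restrict x J) = PiM J M"
    by (rule distr_PiM_restrict_finite) (use J in auto)
  have meas: "(\<lambda>y. \<Prod>i\<in>J. h i (y i)) \<in> borel_measurable (PiM J M)"
    unfolding M_def by measurable
  have "(LINT a|Zp_digits p. (\<Prod>i\<in>J. h i (a i))) = (LINT a|PiM UNIV M. (\<lambda>y. \<Prod>i\<in>J. h i (y i)) (restrict a J))"
    unfolding Zp_digits_def M_def by (intro Bochner_Integration.integral_cong) auto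
  also have "\<dots> = (LINT y|PiM J M. (\<Prod>i\<in>J. h i (y i)))"
    by (subst D[symmetric], subst integral_distr) (use meas in auto)
  also have "\<dots> = (\<Prod>i\<in>J. integral\<^sup>L (M i) (h i))"
    by (rule product_integral_prod[OF J]) (use p in \<open>auto simp: M_def intro!: integrable_measure_pmf_finite\<close>)
  also have "\<dots> = (\<Prod>i\<in>J. (\<Sum>d\<in>{0..<p}. h i d) / of_nat p)"
    unfolding M_def
  proof (intro prod.cong refl)
    fix i
    have "integral\<^sup>L (measure_pmf (pmf_of_set {0..<p})) (h i) = (\<Sum>d\<in>{0..<p}. pmf (pmf_of_set {0..<p}) d *\<^sub>R h i d)"
      by (rule integral_measure_pmf) (use p in auto)
    also have "\<dots> = (\<Sum>d\<in>{0..<p}. h i d / of_nat p)"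
      by (intro sum.cong refl) (use p in \<open>simp add: scaleR_conv_of_real indicator_def\<close>)
    finally show "integral\<^sup>L (measure_pmf (pmf_of_set {0..<p})) (h i) = (\<Sum>d\<in>{0..<p}. h i d) / of_nat p"
      by (simp add: sum_divide_distrib)
  qed
  finally show ?thesis .
qed

definition hh :: "nat \<Rightarrow> int \<Rightarrow> nat \<Rightarrow> nat \<Rightarrow> complex" where
  "hh p n j d = (if j = 0 \<and> d = 0 then 0 else if int j < n
     then exp (2 * pi * \<i> * complex_of_real (real d * real p powi (int j - n))) else 1)"

lemma norm_shell_iff:
  assumes p: "p \<ge> 2"
  shows "padic_norm p n a = real p powi n \<longleftrightarrow> a 0 \<noteq> 0"
proof (cases "a 0 = 0")
  case False
  hence L: "(LEAST j. a j \<noteq> 0) = 0" by (intro Least_eq_0)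
  have ex: "\<exists>j. a j \<noteq> 0" using False by blast
  show ?thesis using False unfolding padic_norm_def padic_ord_def L if_P[OF ex] by simp
next
  case True
  show ?thesis
  proof (cases "\<exists>j. a j \<noteq> 0")
    case False
    have "real p powi n > 0" using p by simp
    thus ?thesis using True False p unfolding padic_norm_def by simp
  next
    case ex: True
    define j0 where "j0 = (LEAST j. a j \<noteq> 0)"
    have "a j0 \<noteq> 0" unfolding j0_def by (rule LeastI_ex[OF ex])
    hence j0: "j0 \<ge> 1" using True by (cases j0) auto
    have "padic_norm p n a = real p powi (n - int j0)"
      unfolding padic_norm_def padic_ord_def if_P[OF ex] j0_def[symmetric] by simp
    also have "\<dots> = real p powi n / real p powi (int j0)"
      using p by (intro power_int_diff) simp
    also have "\<dots> = real p powi n / real p ^ j0" by (simp only: power_int_of_nat)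
    also have "\<dots> < real p powi n"
    proof -
      have "real p ^ j0 > 1" using p j0 by (intro one_less_power) auto
      moreover have "real p powi n > 0" using p by simp
      ultimately show ?thesis using p by (simp add: divide_less_eq)
    qed
    finally show ?thesis using True by auto
  qed
qed

lemma ord_shell:
  assumes "a 0 \<noteq> 0"
  shows "padic_ord n a = - n" "padic_norm p n a = real p powi n"
proof -
  have "(LEAST j. a j \<noteq> 0) = 0" using assms by (intro Least_eq_0) auto
  thus "padic_ord n a = - n" "padic_norm p n a = real p powi n"
    using assms by (auto simp: padic_norm_def padic_ord_def)
qed

lemma integrand_eq:
  assumes p: "p \<ge> 2"
  shows "indicator {a. padic_norm p n a = real p powi n} a * twisted_gamma_integrand p chi s n a =
     (complex_of_real (real p powi n) powr (s - 1) * chi p powi (- n)) *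
     (\<Prod>j<max 1 (nat n). hh p n j (a j))"
proof (cases "a 0 = 0")
  case True
  have "(\<Prod>j<max 1 (nat n). hh p n j (a j)) = 0"
    by (rule prod_zero) (use True in \<open>auto simp: hh_def intro!: bexI[where x=0]\<close>)
  thus ?thesis using True norm_shell_iff[OF p, of n a] by (simp add: indicator_def)
next
  case False
  have ind: "indicator {a. padic_norm p n a = real p powi n} a = (1::complex)"
    using False norm_shell_iff[OF p, of n a] by (simp add: indicator_def)
  have pc: "padic_char p n a = (\<Prod>j<max 1 (nat n). hh p n j (a j))"
  proof (cases "n \<ge> 1")
    case True
    hence mx: "max 1 (nat n) = nat n" by simp
    have "padic_char p n a = (\<Prod>j<nat n. exp (2 * pi * \<i> * complex_of_real (real (a j) * real p powi (int j - n))))"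
      unfolding padic_char_def padic_frac_def of_real_sum sum_distrib_left
      by (simp add: exp_sum)
    also have "\<dots> = (\<Prod>j<nat n. hh p n j (a j))"
    proof (intro prod.cong refl)
      fix j assume "j \<in> {..<nat n}"
      thus "exp (2 * pi * \<i> * complex_of_real (real (a j) * real p powi (int j - n))) = hh p n j (a j)"
        using False by (cases "j = 0") (auto simp: hh_def)
    qed
    finally show ?thesis unfolding mx .
  next
    case nn: False
    hence "nat n = 0" by simp
    thus ?thesis using nn False by (simp add: padic_char_def padic_frac_def hh_def lessThan_Suc)
  qed
  show ?thesis unfolding ind twisted_gamma_integrand_def frakx_def ord_shell(1)[where a=a and n=n, OF False] ord_shell(2)[where a=a and n=n and p=p, OF False] pc
    by simp
qed


lemma roots_sum:
  assumes p: "p \<ge> (2::nat)"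
  shows "(\<Sum>d\<in>{0..<p}. exp (2 * pi * \<i> * complex_of_real (real d * real p powi (-1)))) = 0"
proof -
  define z where "z = exp (2 * pi * \<i> / of_nat p)"
  have t: "exp (2 * pi * \<i> * complex_of_real (real d * real p powi (-1))) = z ^ d" for d
  proof -
    have "2 * pi * \<i> * complex_of_real (real d * real p powi (-1)) = of_nat d * (2 * pi * \<i> / of_nat p)"
      by (simp add: power_int_minus field_simps)
    thus ?thesis unfolding z_def by (simp only: exp_of_nat_mult)
  qed
  have zp: "z ^ p = 1"
  proof -
    have "z ^ p = exp (of_nat p * (2 * pi * \<i> / of_nat p))" unfolding z_def by (simp only: exp_of_nat_mult)
    also have "of_nat p * (2 * pi * \<i> / of_nat p) = 2 * pi * \<i>" using p by simp
    finally show ?thesis by simp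
  qed
  have z1: "z \<noteq> 1"
  proof
    assume "z = 1"
    then obtain n :: int where n: "2 * pi / real p = of_int (2 * n) * pi"
      unfolding z_def exp_eq_1 by auto
    hence "(2 / real p) * pi = (2 * of_int n) * pi" by simp
    hence "2 / real p = 2 * of_int n" by (metis mult_right_cancel pi_neq_zero)
    hence "1 / real p = of_int n" by simp
    hence "1 = real p * of_int n" using p by (simp add: field_simps)
    hence "1 = int p * n" by (metis of_int_eq_1_iff of_int_mult of_int_of_nat_eq)
    hence "int p dvd 1" by (rule dvdI)
    hence "p dvd 1" by (metis of_nat_1 of_nat_dvd_iff)
    thus False using p by simp
  qed
  have "(\<Sum>d\<in>{0..<p}. exp (2 * pi * \<i> * complex_of_real (real d * real p powi (-1)))) = (\<Sum>d<p. z ^ d)"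
    unfolding t by (simp add: atLeast0LessThan)
  also have "\<dots> = 0" using z1 zp by (simp add: sum_gp_strict)
  finally show ?thesis .
qed


lemma powi_exp: "p > 0 \<Longrightarrow> real p powi n = exp (of_int n * ln (real p))"
proof (cases "n \<ge> 0")
  case True
  assume "p > 0"
  then obtain m where "n = int m" using True by (metis nonneg_eq_int)
  thus ?thesis using \<open>p > 0\<close> by (simp add: exp_of_nat_mult)
next
  case False
  assume "p > 0"
  then obtain m where m: "n = - int m" using False by (metis nonpos_int_cases linorder_linear)
  have "real p powi n = inverse (real p ^ m)" unfolding m by (simp add: power_int_minus)
  also have "\<dots> = inverse (exp (of_nat m * ln (real p)))" using \<open>p>0\<close> by (simp add: exp_of_nat_mult)
  also have "\<dots> = exp (of_int n * ln (real p))" unfolding m by (simp add: exp_minus)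
  finally show ?thesis .
qed

lemma powr_of_real_exp: "complex_of_real (exp x) powr z = exp (z * complex_of_real x)"
  by (simp add: powr_def Ln_of_real)

lemma powr_of_nat_exp: "p > 0 \<Longrightarrow> (of_nat p :: complex) powr z = exp (z * complex_of_real (ln (real p)))"
  by (simp add: powr_def)


lemma chi_norm:
  assumes "prime p" "k > 0" "\<not> p dvd k" "dirichlet_character k chi"
  shows "norm (chi p) = 1"
proof -
  have mult: "\<And>a b. chi (a * b) = chi a * chi b" and per: "\<And>a. chi (a + k) = chi a"
    and nz: "\<And>a. chi a \<noteq> 0 \<longleftrightarrow> coprime a k" using assms(4) unfolding dirichlet_character_def by auto
  have per2: "chi (r + q * k) = chi r" for r q
  proof (induction q)
    case (Suc q)
    have "chi (r + Suc q * k) = chi ((r + q*k) + k)" by (simp add: algebra_simps)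
    also have "\<dots> = chi (r + q*k)" by (rule per)
    finally show ?case using Suc by simp
  qed simp
  have modk: "chi a = chi (a mod k)" for a
    using per2[of "a mod k" "a div k"] by simp
  have c1: "chi 1 = 1"
  proof -
    have "chi 1 = chi 1 * chi 1" using mult[of 1 1] by simp
    moreover have "chi 1 \<noteq> 0" using nz by simp
    ultimately show ?thesis by simp
  qed
  have pw: "chi (p ^ m) = chi p ^ m" for m
  proof (induction m)
    case 0
    show ?case using c1 by (simp only: power_0)
  next
    case (Suc m)
    show ?case using Suc by (simp only: power_Suc mult)
  qed
  have cop: "coprime p k" using assms(1,3) by (metis prime_imp_coprime)
  have "[p ^ totient k = 1] (mod k)" by (rule euler_theorem[OF cop])
  hence "p ^ totient k mod k = 1 mod k" by (simp add: cong_def)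
  note eq = this
  have "chi (p ^ totient k) = chi (p ^ totient k mod k)" by (rule modk)
  also have "\<dots> = chi (1 mod k)" by (simp only: eq)
  also have "\<dots> = chi 1" by (rule modk[symmetric])
  finally have "chi (p ^ totient k) = chi 1" .
  hence "chi p ^ totient k = 1" using pw c1 by simp
  hence "norm (chi p) ^ totient k = 1" by (metis norm_one norm_power)
  moreover have "totient k > 0" using assms(2) by simp
  ultimately show ?thesis using power_eq_imp_eq_base[of "norm (chi p)" "totient k" 1] by simp
qed



lemma shell_eq:
  assumes p: "p \<ge> 2"
  shows "shell_integral p n (twisted_gamma_integrand p chi s) =
     complex_of_real (real p powi n) * (complex_of_real (real p powi n) powr (s - 1) * chi p powi (- n)) *
     (\<Prod>j<max 1 (nat n). (\<Sum>d\<in>{0..<p}. hh p n j d) / of_nat p)"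
proof -
  have "(LINT a|Zp_digits p. indicator {a. padic_norm p n a = real p powi n} a * twisted_gamma_integrand p chi s n a)
      = (LINT a|Zp_digits p. (complex_of_real (real p powi n) powr (s - 1) * chi p powi (- n)) *
     (\<Prod>j<max 1 (nat n). hh p n j (a j)))"
    by (intro Bochner_Integration.integral_cong refl integrand_eq[OF p])
  also have "\<dots> = (complex_of_real (real p powi n) powr (s - 1) * chi p powi (- n)) *
      (LINT a|Zp_digits p. (\<Prod>j<max 1 (nat n). hh p n j (a j)))"
    by (rule integral_mult_right_zero)
  also have "(LINT a|Zp_digits p. (\<Prod>j<max 1 (nat n). hh p n j (a j))) =
      (\<Prod>j<max 1 (nat n). (\<Sum>d\<in>{0..<p}. hh p n j d) / of_nat p)"
    by (rule Zp_integral_prod) (use p in auto)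
  finally show ?thesis unfolding shell_integral_def by (simp only: mult.assoc)
qed

lemma hh_sum0:
  assumes p: "p \<ge> 2" and n: "n \<le> 0"
  shows "(\<Sum>d\<in>{0..<p}. hh p n 0 d) = of_nat p - 1"
proof -
  have "(\<Sum>d\<in>{0..<p}. hh p n 0 d) = hh p n 0 0 + (\<Sum>d\<in>{0..<p} - {0}. hh p n 0 d)"
    by (rule sum.remove) (use p in auto)
  also have "(\<Sum>d\<in>{0..<p} - {0}. hh p n 0 d) = (\<Sum>d\<in>{0..<p} - {0}. 1)"
    by (intro sum.cong refl) (use n in \<open>auto simp: hh_def\<close>)
  also have "\<dots> = of_nat (p - 1)" using p by simp
  finally show ?thesis using p by (simp add: hh_def of_nat_diff)
qed

lemma hh_sum1:
  assumes p: "p \<ge> 2"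
  shows "(\<Sum>d\<in>{0..<p}. hh p 1 0 d) = - 1"
proof -
  define e where "e = (\<lambda>d::nat. exp (2 * pi * \<i> * complex_of_real (real d * real p powi (-1))))"
  have "0 = (\<Sum>d\<in>{0..<p}. e d)" using roots_sum[OF p] unfolding e_def by simp
  also have "\<dots> = e 0 + (\<Sum>d\<in>{0..<p} - {0}. e d)"
    by (rule sum.remove) (use p in auto)
  finally have r: "(\<Sum>d\<in>{0..<p} - {0}. e d) = - 1" unfolding e_def by (simp add: eq_neg_iff_add_eq_0 add.commute)
  have "(\<Sum>d\<in>{0..<p}. hh p 1 0 d) = hh p 1 0 0 + (\<Sum>d\<in>{0..<p} - {0}. hh p 1 0 d)"
    by (rule sum.remove) (use p in auto)
  also have "(\<Sum>d\<in>{0..<p} - {0}. hh p 1 0 d) = (\<Sum>d\<in>{0..<p} - {0}. e d)"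
    by (intro sum.cong refl) (auto simp: hh_def e_def)
  finally show ?thesis using r by (simp add: hh_def)
qed

lemma hh_sum2:
  assumes p: "p \<ge> 2" and n: "n \<ge> 2"
  shows "(\<Sum>d\<in>{0..<p}. hh p n (nat n - 1) d) = 0"
proof -
  have "(\<Sum>d\<in>{0..<p}. hh p n (nat n - 1) d) =
     (\<Sum>d\<in>{0..<p}. exp (2 * pi * \<i> * complex_of_real (real d * real p powi (-1))))"
  proof (intro sum.cong refl)
    fix d
    have "nat n - 1 \<noteq> 0" "int (nat n - 1) < n" "int (nat n - 1) - n = -1" using n by auto
    thus "hh p n (nat n - 1) d = exp (2 * pi * \<i> * complex_of_real (real d * real p powi (-1)))"
      unfolding hh_def by simp
  qed
  also have "\<dots> = 0" by (rule roots_sum[OF p])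
  finally show ?thesis .
qed

lemma shell_ge2:
  assumes p: "p \<ge> 2" and n: "n \<ge> 2"
  shows "shell_integral p n (twisted_gamma_integrand p chi s) = 0"
proof -
  have "(\<Prod>j<max 1 (nat n). (\<Sum>d\<in>{0..<p}. hh p n j d) / of_nat p) = 0"
  proof (rule prod_zero)
    show "\<exists>j\<in>{..<max 1 (nat n)}. (\<Sum>d\<in>{0..<p}. hh p n j d) / of_nat p = 0"
      by (rule bexI[where x="nat n - 1"]) (use n hh_sum2[OF p n] in auto)
  qed simp
  thus ?thesis unfolding shell_eq[OF p] by simp
qed

lemma shell_1:
  assumes p: "p \<ge> 2"
  shows "shell_integral p 1 (twisted_gamma_integrand p chi s) = - (of_nat p powr (s - 1)) / chi p"
proof -
  have "shell_integral p 1 (twisted_gamma_integrand p chi s) =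
     of_nat p * (of_nat p powr (s - 1) * inverse (chi p)) * ((- 1) / of_nat p)"
    unfolding shell_eq[OF p] using hh_sum1[OF p] by (simp add: power_int_minus)
  also have "\<dots> = - (of_nat p powr (s - 1)) / chi p" using p by (simp add: field_simps)
  finally show ?thesis .
qed

lemma shell_neg:
  assumes p: "p \<ge> 2"
  shows "shell_integral p (- int m) (twisted_gamma_integrand p chi s) =
     ((of_nat p - 1) / of_nat p) * (chi p * of_nat p powr (- s)) ^ m"
proof -
  define L where "L = ln (real p)"
  have pp: "real p powi (- int m) = exp (- (of_nat m * L))"
    using powi_exp[of p "- int m"] p unfolding L_def by simp
  have A: "complex_of_real (real p powi (- int m)) * complex_of_real (real p powi (- int m)) powr (s - 1)
      = (of_nat p powr (- s)) ^ m"
  proof -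
    have "complex_of_real (real p powi (- int m)) * complex_of_real (real p powi (- int m)) powr (s - 1)
        = exp (complex_of_real (- (of_nat m * L))) * exp ((s - 1) * complex_of_real (- (of_nat m * L)))"
    proof -
      have e1: "complex_of_real (real p powi (- int m)) = exp (complex_of_real (- (of_nat m * L)))"
        unfolding pp by (rule exp_of_real[symmetric])
      have e2: "complex_of_real (real p powi (- int m)) powr (s-1) = exp ((s - 1) * complex_of_real (- (of_nat m * L)))"
        unfolding pp by (rule powr_of_real_exp)
      show ?thesis unfolding e2 unfolding e1 by (rule refl)
    qed
    also have "\<dots> = exp (of_nat m * (- s * complex_of_real L))"
      by (simp add: exp_add[symmetric] algebra_simps)
    also have "\<dots> = (exp (- s * complex_of_real L)) ^ m" by (rule exp_of_nat_mult)
    also have "exp (- s * complex_of_real L) = of_nat p powr (- s)"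
      using powr_of_nat_exp[of p "- s"] p unfolding L_def by simp
    finally show ?thesis .
  qed
  have "shell_integral p (- int m) (twisted_gamma_integrand p chi s) =
     (complex_of_real (real p powi (- int m)) * complex_of_real (real p powi (- int m)) powr (s - 1)) * chi p ^ m *
     ((of_nat p - 1) / of_nat p)"
    unfolding shell_eq[OF p] using hh_sum0[OF p, of "- int m"] by (simp add: power_int_of_nat lessThan_Suc)
  also have "\<dots> = ((of_nat p - 1) / of_nat p) * (chi p * of_nat p powr (- s)) ^ m"
    unfolding A by (simp add: power_mult_distrib algebra_simps)
  finally show ?thesis .
qed


theorem mainTheorem1:
  fixes p k :: nat and chi :: "nat \<Rightarrow> complex" and s :: complex
  assumes "prime p" and "k > 0" and "\<not> p dvd k"
    and "dirichlet_character k chi"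
    and "Re s > 0"
  shows "((\<lambda>n::int. shell_integral p n (twisted_gamma_integrand p chi s)) has_sum
           ((chi p - of_nat p powr (s - 1)) / (chi p * (1 - chi p * of_nat p powr (- s)))))
         UNIV"
proof -
  have p: "p \<ge> 2" using assms(1) by (rule prime_ge_2_nat)
  define f where "f = (\<lambda>n::int. shell_integral p n (twisted_gamma_integrand p chi s))"
  define c where "c = chi p"
  define E where "E = (of_nat p powr (- s) :: complex)"
  define Q where "Q = (of_nat p powr (s - 1) :: complex)"
  define w where "w = c * E"
  define A where "A = ((of_nat p - 1) / of_nat p :: complex)"
  define L where "L = ln (real p)"
  have L: "L > 0" unfolding L_def using p by simp
  have Eexp: "E = exp (- s * complex_of_real L)" unfolding E_def L_def using powr_of_nat_exp[of p "- s"] p by simp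
  have Qexp: "Q = exp ((s - 1) * complex_of_real L)" unfolding Q_def L_def using powr_of_nat_exp[of p "s - 1"] p by simp
  have nc: "norm c = 1" unfolding c_def by (rule chi_norm[OF assms(1-4)])
  have c0: "c \<noteq> 0" using nc by auto
  have nE: "norm E < 1"
  proof -
    have "norm E = exp (Re (- s * complex_of_real L))" unfolding Eexp by (rule norm_exp_eq_Re)
    also have "Re (- s * complex_of_real L) = - (Re s * L)" by simp
    also have "exp (- (Re s * L)) < 1" using assms(5) L by simp
    finally show ?thesis .
  qed
  have nw: "norm w < 1" unfolding w_def using nc nE by (simp add: norm_mult)
  have w1: "1 - c * E \<noteq> 0" using nw unfolding w_def by auto
  have QE: "Q * E = 1 / of_nat p"
  proof -
    have "Q * E = exp ((s - 1) * complex_of_real L + (- s * complex_of_real L))" unfolding Qexp Eexp by (rule exp_add[symmetric])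
    also have "(s - 1) * complex_of_real L + (- s * complex_of_real L) = - complex_of_real L" by (simp add: algebra_simps)
    also have "exp (- complex_of_real L) = inverse (exp (complex_of_real L))" by (simp add: exp_minus)
    also have "exp (complex_of_real L) = of_nat p" unfolding L_def exp_of_real using p by simp
    finally show ?thesis by (simp add: divide_inverse)
  qed
  have sums: "(\<lambda>m. A * w ^ m) sums (A * (1 / (1 - w)))"
    by (rule sums_mult) (rule geometric_sums[OF nw])
  have summ: "summable (\<lambda>m. norm (A * w ^ m))"
  proof -
    have "summable (\<lambda>m. norm A * norm w ^ m)"
      by (rule summable_mult) (rule summable_geometric, use nw in simp)
    thus ?thesis by (simp add: norm_mult norm_power)
  qed
  have hs_nat: "((\<lambda>m. A * w ^ m) has_sum (A * (1 / (1 - w)))) UNIV"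
    by (rule norm_summable_imp_has_sum[OF summ sums])
  have hs_nat': "((\<lambda>m::nat. f (- int m)) has_sum (A * (1 / (1 - w)))) UNIV"
  proof -
    have "(\<lambda>m::nat. f (- int m)) = (\<lambda>m. A * w ^ m)"
      unfolding f_def A_def w_def c_def E_def using shell_neg[OF p] by auto
    thus ?thesis using hs_nat by simp
  qed
  have bij: "bij_betw (\<lambda>m::nat. - int m) UNIV {..0}"
    by (rule bij_betw_byWitness[where f'="\<lambda>x. nat (- x)"]) auto
  have hs_neg: "(f has_sum (A * (1 / (1 - w)))) {..0}"
    using hs_nat' has_sum_reindex_bij_betw[OF bij, of f] by simp
  have hs_ins: "(f has_sum (f 1 + A * (1 / (1 - w)))) (insert 1 {..0})"
    by (rule has_sum_insert[OF _ hs_neg]) simp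
  have hs_all: "(f has_sum (f 1 + A * (1 / (1 - w)))) UNIV"
  proof -
    have "(f has_sum (f 1 + A * (1 / (1 - w)))) (insert 1 {..0}) \<longleftrightarrow> (f has_sum (f 1 + A * (1 / (1 - w)))) UNIV"
    proof (rule has_sum_cong_neutral)
      fix x :: int assume "x \<in> UNIV - insert 1 {..0}"
      hence "x \<ge> 2" by auto
      thus "f x = 0" unfolding f_def by (rule shell_ge2[OF p])
    qed auto
    thus ?thesis using hs_ins by simp
  qed
  have f1: "f 1 = - Q / c" unfolding f_def Q_def c_def by (rule shell_1[OF p])
  have val: "f 1 + A * (1 / (1 - w)) = (c - Q) / (c * (1 - c * E))"
  proof -
    have "f 1 + A * (1 / (1 - w)) = (- Q * (1 - c * E) + A * c) / (c * (1 - c * E))"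
      unfolding f1 w_def using c0 w1 by (simp add: field_simps)
    also have "- Q * (1 - c * E) + A * c = - Q + c * (Q * E) + A * c" by (simp add: algebra_simps)
    also have "\<dots> = c - Q" unfolding QE A_def using p by (simp add: field_simps)
    finally show ?thesis .
  qed
  have "(f has_sum ((c - Q) / (c * (1 - c * E)))) UNIV" using hs_all unfolding val .
  thus ?thesis unfolding f_def c_def Q_def E_def .
qed

end
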